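(* Let $\varepsilon>0$, grant (NormEq) with constant $C'$ and (Hi) with parameters $r$ and $\alpha$, and assume that the oracle is the Bayes rule, i.e. $f^*(x)=\mathrm{sign}(2\eta(x)-1)$ for all $x\in\mathcal X$. Then every $f\in F$ with $\|f-f^*\|_{L_2}\le r$ satisfies $\|f-f^*\|_{L_2}^2\le\frac2\alpha P\mathcal L_f$.
   Context: Setting: $F$ is a convex class of measurable functions $\mathcal X\to\mathbb R$, $\mathcal Y=\{-1,1\}$, $(X,Y)\sim P$, $X\sim\mu$, $\|g\|_{L_p}=(\mathbb E|g(X)|^p)^{1/p}$, $\eta(x)=\mathbb P(Y=1\mid X=x)$. The hinge loss is $\ell_f(x,y)=\max(1-yf(x),0)$. $f^*$ is the minimizer of $f\mapsto P\ell_f$ over $F$, $\mathcal L_f=\ell_f-\ell_{f^*}$, $P\mathcal L_f=\mathbb E\mathcal L_f(X,Y)$. (NormEq): there is $C'>0$ such that $\|f-f^*\|_{L_{2+\varepsilon}}\le C'\|f-f^*\|_{L_2}$ for all $f\in F$. (Hi): there exist $\alpha>0$ and $0<r\le(\sqrt2C')^{-(2+\varepsilon)/\varepsilon}$ such that for all $x\in\mathcal X$, $\min(\eta(x),1-\eta(x),|1-2\eta(x)|)\ge\alpha$. *)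

theory Defs
  imports "HOL-Probability.Probability"
begin

definition convex_class :: "('a \<Rightarrow> real) set \<Rightarrow> bool" where
  "convex_class F \<longleftrightarrow>
     (\<forall>f\<in>F. \<forall>g\<in>F. \<forall>t::real. 0 \<le> t \<and> t \<le> 1 \<longrightarrow> (\<lambda>x. t * f x + (1 - t) * g x) \<in> F)"

definition Lnorm :: "'a measure \<Rightarrow> real \<Rightarrow> ('a \<Rightarrow> real) \<Rightarrow> ennreal" where
  "Lnorm M p g =
     (let I = (\<integral>\<^sup>+ x. ennreal (\<bar>g x\<bar> powr p) \<partial>M)
      in if I = \<infinity> then \<infinity> else ennreal (enn2real I powr (1 / p)))"

definition hinge :: "real \<Rightarrow> real \<Rightarrow> real" where
  "hinge t y = max (1 - y * t) 0"

text \<open>Hinge risk P l_f for (X,Y) with X ~ M and P(Y = 1 | X = x) = eta x.\<close>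
definition hinge_risk :: "'a measure \<Rightarrow> ('a \<Rightarrow> real) \<Rightarrow> ('a \<Rightarrow> real) \<Rightarrow> ennreal" where
  "hinge_risk M eta f =
     (\<integral>\<^sup>+ x. ennreal (eta x * hinge (f x) 1 + (1 - eta x) * hinge (f x) (-1)) \<partial>M)"

definition excess_risk :: "'a measure \<Rightarrow> ('a \<Rightarrow> real) \<Rightarrow> ('a \<Rightarrow> real) \<Rightarrow> ('a \<Rightarrow> real) \<Rightarrow> real" where
  "excess_risk M eta fstar f =
     (\<integral> x. eta x * (hinge (f x) 1 - hinge (fstar x) 1)
          + (1 - eta x) * (hinge (f x) (-1) - hinge (fstar x) (-1)) \<partial>M)"

end

theory Submission
  imports Defs
begin

lemma young_pt:
  fixes \<epsilon> \<kappa> a :: real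
  assumes "\<epsilon> > 0" "\<kappa> > 0"
  shows "a\<^sup>2 \<le> \<kappa> powr ((2+\<epsilon>)/2) * \<bar>a\<bar> powr (2+\<epsilon>) / ((2+\<epsilon>)/2)
              + \<kappa> powr (-((2+\<epsilon>)/\<epsilon>)) / ((2+\<epsilon>)/\<epsilon>)"
proof -
  have y: "(\<kappa>*a\<^sup>2) * (1/\<kappa>) \<le> (\<kappa>*a\<^sup>2) powr ((2+\<epsilon>)/2) / ((2+\<epsilon>)/2) + (1/\<kappa>) powr ((2+\<epsilon>)/\<epsilon>) / ((2+\<epsilon>)/\<epsilon>)"
    proof (rule Youngs_inequality)
    have "0 < \<epsilon>*\<epsilon> + (4 + \<epsilon>*4)" using assms by (simp add: add_pos_pos)
    then show "1 / ((2 + \<epsilon>) / 2) + 1 / ((2 + \<epsilon>) / \<epsilon>) = 1" using assms by (simp add: field_simps)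
  qed (use assms in auto)
  have "(\<kappa>*a\<^sup>2) powr ((2+\<epsilon>)/2) = \<kappa> powr ((2+\<epsilon>)/2) * \<bar>a\<bar> powr (2+\<epsilon>)"
  proof -
    have "a\<^sup>2 = \<bar>a\<bar> powr 2" by (simp add: powr_numeral)
    hence "(a\<^sup>2) powr ((2+\<epsilon>)/2) = (\<bar>a\<bar> powr 2) powr ((2+\<epsilon>)/2)" by (rule arg_cong[where f="\<lambda>z. z powr ((2+\<epsilon>)/2)"])
    also have "\<dots> = \<bar>a\<bar> powr (2+\<epsilon>)" proof - have "2 * ((2+\<epsilon>)/2) = 2+\<epsilon>" by simp thus ?thesis by (simp only: powr_powr) qed
    finally have "(a\<^sup>2) powr ((2+\<epsilon>)/2) = \<bar>a\<bar> powr (2+\<epsilon>)" .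
    thus ?thesis using assms by (simp add: powr_mult)
  qed
  moreover have "(1/\<kappa>) powr ((2+\<epsilon>)/\<epsilon>) = \<kappa> powr (-((2+\<epsilon>)/\<epsilon>))"
    using assms by (simp add: powr_minus_divide powr_divide)
  ultimately show ?thesis using y assms by simp
qed

lemma excess_pt:
  fixes e t s \<alpha> :: real
  assumes "\<alpha> > 0" "min e (min (1 - e) \<bar>1 - 2 * e\<bar>) \<ge> \<alpha>" "s = sgn (2 * e - 1)"
  shows "\<alpha> * \<bar>t - s\<bar> \<le> e * (hinge t 1 - hinge s 1) + (1 - e) * (hinge t (-1) - hinge s (-1))"
proof (cases "e > 1/2")
  case True
  then have s: "s = 1" using assms by (simp add: sgn_if)
  show ?thesis
  proof (cases "t \<ge> 1")
    case True
    have "\<alpha> * (t - 1) \<le> (1-e) * (t-1)" using assms True by (intro mult_right_mono) auto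
    then show ?thesis using True s by (simp add: hinge_def max_def algebra_simps)
  next
    case False
    show ?thesis
    proof (cases "t \<ge> -1")
      case True
      have "\<alpha> * (1 - t) \<le> (2*e-1) * (1-t)" using assms True False \<open>e > 1/2\<close> by (intro mult_right_mono) auto
      moreover have "2*\<alpha> \<le> 2*(2*e-1)" using assms \<open>e > 1/2\<close> by auto
      ultimately show ?thesis using True False s by (cases "t = -1") (simp_all add: hinge_def max_def algebra_simps)
    next
      case F2: False
      have "\<alpha> * (-1 - t) \<le> e * (-1-t)" using assms F2 by (intro mult_right_mono) auto
      moreover have "2*\<alpha> \<le> 2*(2*e-1)" using assms \<open>e > 1/2\<close> by auto
      ultimately show ?thesis using F2 False s by (simp add: hinge_def max_def algebra_simps)
    qed
  qed
next
  case False
  then have e: "e < 1/2" using assms by auto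
  then have s: "s = -1" using assms by (simp add: sgn_if)
  show ?thesis
  proof (cases "t \<le> -1")
    case True
    have "\<alpha> * (-1-t) \<le> e * (-1-t)" using assms True by (intro mult_right_mono) auto
    then show ?thesis using True s by (simp add: hinge_def max_def algebra_simps)
  next
    case False
    show ?thesis
    proof (cases "t \<le> 1")
      case True
      have "\<alpha> * (1 + t) \<le> (1-2*e) * (1+t)" using assms True False e by (intro mult_right_mono) auto
      moreover have "2*\<alpha> \<le> 2*(1-2*e)" using assms e by auto
      ultimately show ?thesis using True False s by (cases "t = 1") (simp_all add: hinge_def max_def algebra_simps)
    next
      case F2: False
      have "\<alpha> * (t-1) \<le> (1-e) * (t-1)" using assms F2 by (intro mult_right_mono) auto
      moreover have "2*\<alpha> \<le> 2*(1-2*e)" using assms e by auto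
      ultimately show ?thesis using F2 False s by (simp add: hinge_def max_def algebra_simps)
    qed
  qed
qed

lemma t1aux: fixes D e lc L :: real assumes "D \<noteq> 0" "D = 2+e"
  shows "D/2 * (-(2*lc + 2*e*L/D)*e/D) + D*(lc+L) = 2*lc+2*L+2*e*L/D"
proof -
  have "D/2 * (-(2*lc + 2*e*L/D)*e/D) = -(lc*e) - e*e*L/D" using assms(1) by (simp add: field_simps)
  moreover have "D*L = 2*L + 2*e*L/D + e*e*L/D"
  proof -
    have a: "(2*L + 2*e*L/D + e*e*L/D)*D = 2*L*D + 2*e*L + e*e*L" using assms(1) by (simp add: field_simps)
    have b: "D*L*D = 2*L*D + 2*e*L + e*e*L" using assms(2) by (simp add: algebra_simps)
    from a b have "D*L*D = (2*L + 2*e*L/D + e*e*L/D)*D" by simp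
    thus ?thesis using assms(1) by simp
  qed
  ultimately show ?thesis using assms(2) by (simp add: algebra_simps)
qed
lemma t2aux: fixes D e lc L :: real assumes "D \<noteq> 0" "e \<noteq> 0"
  shows "-(D/e) * (-(2*lc + 2*e*L/D)*e/D) + 2*L = 2*lc+2*L+2*e*L/D"
  using assms by (simp add: field_simps)

lemma eps_aux: "(\<epsilon>::real) > 0 \<Longrightarrow> 2*\<epsilon>/(2+\<epsilon>) * (- (2 + \<epsilon>) / \<epsilon>) = -2"
proof -
  assume e: "\<epsilon> > 0"
  have h: "\<epsilon>*\<epsilon>+\<epsilon>*2 > 0" using e by (simp add: add_pos_pos)
  have "2*\<epsilon>/(2+\<epsilon>) * (- (2 + \<epsilon>) / \<epsilon>) = (- (\<epsilon> * (\<epsilon> * 2)) - \<epsilon> * 4) / (\<epsilon> * \<epsilon> + \<epsilon> * 2)"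
    by (simp add: field_simps)
  also have "\<dots> = -2" using h by (simp add: field_simps)
  finally show ?thesis .
qed

lemma key_real:
  fixes \<epsilon> C N :: real
  assumes e: "\<epsilon> > 0" and C: "C > 0" and N: "N > 0"
    and Nle: "N \<le> (sqrt 2 * C) powr (- (2 + \<epsilon>) / \<epsilon>)"
  shows "\<exists>\<kappa>>0. \<kappa> powr ((2+\<epsilon>)/2) * (C*N) powr (2+\<epsilon>) / ((2+\<epsilon>)/2)
              + \<kappa> powr (-((2+\<epsilon>)/\<epsilon>)) * N\<^sup>2 / ((2+\<epsilon>)/\<epsilon>) \<le> N\<^sup>2/2"
proof -
  define lc where "lc = ln C"
  define L where "L = ln N"
  define k where "k = -(2*lc + 2*\<epsilon>*L/(2+\<epsilon>)) * \<epsilon>/(2+\<epsilon>)"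
  define Q where "Q = exp (2*lc + 2*L + 2*\<epsilon>*L/(2+\<epsilon>))"
  have e2: "2 + \<epsilon> > 0" using e by simp
  have N2: "N\<^sup>2 = exp (2*L)" proof -
    have "exp (2*L) = exp (L + L)" by simp
    also have "\<dots> = N * N" using N by (simp only: exp_add L_def exp_ln)
    finally show ?thesis by (simp add: power2_eq_square)
  qed
  have lsq: "ln (sqrt 2 * C) = ln 2 / 2 + lc"
    using C by (simp add: ln_mult lc_def ln_sqrt)
  have "L \<le> ln ((sqrt 2 * C) powr (- (2 + \<epsilon>) / \<epsilon>))"
  proof -
    have pos: "0 < (sqrt 2 * C) powr (- (2 + \<epsilon>) / \<epsilon>)" using C by simp
    show ?thesis using Nle N pos unfolding L_def by (simp only: ln_le_cancel_iff)
  qed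
  also have "\<dots> = (- (2 + \<epsilon>) / \<epsilon>) * (ln 2 / 2 + lc)" using C by (simp add: ln_powr lsq)
  finally have Lle: "L \<le> (- (2 + \<epsilon>) / \<epsilon>) * (ln 2 / 2 + lc)" .
  hence "2*\<epsilon>/(2+\<epsilon>) * L \<le> 2*\<epsilon>/(2+\<epsilon>) * ((- (2 + \<epsilon>) / \<epsilon>) * (ln 2 / 2 + lc))"
    using e by (intro mult_left_mono) auto
  also have "\<dots> = (2*\<epsilon>/(2+\<epsilon>) * (- (2 + \<epsilon>) / \<epsilon>)) * (ln 2 / 2 + lc)" by (simp only: mult.assoc)
  also have "2*\<epsilon>/(2+\<epsilon>) * (- (2 + \<epsilon>) / \<epsilon>) = -2" using e by (rule eps_aux)
  also have "-2 * (ln 2 / 2 + lc) = -(ln 2 + 2*lc)" by simp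
  finally have Lle2: "2*\<epsilon>*L/(2+\<epsilon>) \<le> -(ln 2 + 2*lc)" by simp
  have Qle: "Q \<le> N\<^sup>2/2"
  proof -
    have "Q = exp (2*L) * exp (2*lc + 2*\<epsilon>*L/(2+\<epsilon>))" unfolding Q_def by (simp add: exp_add[symmetric])
    also have "exp (2*lc + 2*\<epsilon>*L/(2+\<epsilon>)) \<le> exp (- ln 2)" using Lle2 by simp
    also have "exp (- ln 2) = (1::real)/2" by (simp add: exp_minus)
    finally show ?thesis using N2 by simp
  qed
  have t1: "(exp k) powr ((2+\<epsilon>)/2) * (C*N) powr (2+\<epsilon>) = Q"
  proof -
    have "(exp k) powr ((2+\<epsilon>)/2) * (C*N) powr (2+\<epsilon>) = exp ((2+\<epsilon>)/2 * k + (2+\<epsilon>) * (lc + L))"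
      using C N by (simp add: powr_def lc_def L_def ln_mult exp_add)
    also have "(2+\<epsilon>)/2 * k + (2+\<epsilon>) * (lc + L) = 2*lc + 2*L + 2*\<epsilon>*L/(2+\<epsilon>)"
      unfolding k_def using t1aux[of "2+\<epsilon>" \<epsilon> lc L] e2 by simp
    finally show ?thesis by (simp add: Q_def)
  qed
  have t2: "(exp k) powr (-((2+\<epsilon>)/\<epsilon>)) * N\<^sup>2 = Q"
  proof -
    have "(exp k) powr (-((2+\<epsilon>)/\<epsilon>)) * N\<^sup>2 = exp (-((2+\<epsilon>)/\<epsilon>) * k + 2 * L)"
      using N2 by (simp add: powr_def exp_add[symmetric])
    also have "-((2+\<epsilon>)/\<epsilon>) * k + 2 * L = 2*lc + 2*L + 2*\<epsilon>*L/(2+\<epsilon>)"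
      unfolding k_def using t2aux[of "2+\<epsilon>" \<epsilon> lc L] e e2 by simp
    finally show ?thesis by (simp add: Q_def)
  qed
  have "(exp k) powr ((2+\<epsilon>)/2) * (C*N) powr (2+\<epsilon>) / ((2+\<epsilon>)/2)
              + (exp k) powr (-((2+\<epsilon>)/\<epsilon>)) * N\<^sup>2 / ((2+\<epsilon>)/\<epsilon>) = Q * (2/(2+\<epsilon>) + \<epsilon>/(2+\<epsilon>))"
    using t1 t2 by (simp add: algebra_simps)
  also have "\<dots> = Q" using e2 by (simp add: add_divide_distrib[symmetric])
  finally show ?thesis using Qle by (intro exI[of _ "exp k"]) simp
qed

lemma l1: "\<bar>y::real\<bar> \<le> 1 + y\<^sup>2"
proof (cases "\<bar>y\<bar> \<le> 1")
  case True then show ?thesis by (simp add: add_increasing2)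
next
  case False
  then have "\<bar>y\<bar> * 1 \<le> \<bar>y\<bar> * \<bar>y\<bar>" by (intro mult_left_mono) auto
  then show ?thesis by (simp add: power2_eq_square abs_mult[symmetric])
qed
lemma l2: "\<bar>y::real\<bar> \<le> 1 \<Longrightarrow> y\<^sup>2 \<le> \<bar>y\<bar>"
proof -
  assume a: "\<bar>y\<bar> \<le> 1"
  have "\<bar>y\<bar> * \<bar>y\<bar> \<le> \<bar>y\<bar> * 1" using a by (intro mult_left_mono) auto
  then show ?thesis by (simp add: power2_eq_square abs_mult[symmetric])
qed
lemma l3: "\<not> \<bar>y::real\<bar> \<le> 1 \<Longrightarrow> 1 \<le> y\<^sup>2"
proof -
  assume a: "\<not> \<bar>y\<bar> \<le> 1"
  have "1 * 1 \<le> \<bar>y\<bar> * \<bar>y\<bar>" using a by (intro mult_mono) auto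
  then show ?thesis by (simp add: power2_eq_square abs_mult[symmetric])
qed

lemma hinge_lip: "\<bar>hinge t y - hinge s y\<bar> \<le> \<bar>t - s\<bar>" if "y = 1 \<or> y = -1"
  using that by (auto simp: hinge_def max_def)

theorem theorem9:
  fixes M :: "'a measure" and eta :: "'a \<Rightarrow> real" and F :: "('a \<Rightarrow> real) set"
    and fstar :: "'a \<Rightarrow> real" and \<epsilon> C' \<alpha> r :: real
  assumes prob: "prob_space M"
    and eta_meas: "eta \<in> borel_measurable M"
    and eta_range: "\<And>x. x \<in> space M \<Longrightarrow> 0 \<le> eta x \<and> eta x \<le> 1"
    and F_meas: "F \<subseteq> borel_measurable M"
    and F_convex: "convex_class F"
    and fstar_in: "fstar \<in> F"
    and fstar_min: "\<And>f. f \<in> F \<Longrightarrow> hinge_risk M eta fstar \<le> hinge_risk M eta f"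
    and eps_pos: "\<epsilon> > 0"
    and NormEq: "C' > 0"
      "\<And>f. f \<in> F \<Longrightarrow> Lnorm M (2 + \<epsilon>) (\<lambda>x. f x - fstar x)
                         \<le> ennreal C' * Lnorm M 2 (\<lambda>x. f x - fstar x)"
    and Hi: "\<alpha> > 0" "r > 0" "r \<le> (sqrt 2 * C') powr (- (2 + \<epsilon>) / \<epsilon>)"
      "\<And>x. x \<in> space M \<Longrightarrow> min (eta x) (min (1 - eta x) \<bar>1 - 2 * eta x\<bar>) \<ge> \<alpha>"
    and bayes: "\<And>x. x \<in> space M \<Longrightarrow> fstar x = sgn (2 * eta x - 1)"
  shows "\<And>f. f \<in> F \<Longrightarrow> Lnorm M 2 (\<lambda>x. f x - fstar x) \<le> ennreal r \<Longrightarrow>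
           (Lnorm M 2 (\<lambda>x. f x - fstar x))\<^sup>2 \<le> ennreal (2 / \<alpha> * excess_risk M eta fstar f)"
proof -
  fix f assume fF: "f \<in> F" and small: "Lnorm M 2 (\<lambda>x. f x - fstar x) \<le> ennreal r"
  interpret P: prob_space M by (rule prob)
  define d where "d = (\<lambda>x. f x - fstar x)"
  have fm: "f \<in> borel_measurable M" and fsm: "fstar \<in> borel_measurable M"
    using F_meas fF fstar_in by auto
  have dm: "d \<in> borel_measurable M" unfolding d_def using fm fsm by measurable
  have sq: "\<And>x. \<bar>d x\<bar> powr 2 = (d x)\<^sup>2" by simp
  define I2 where "I2 = (\<integral>\<^sup>+ x. ennreal (\<bar>d x\<bar> powr 2) \<partial>M)"
  have L2def: "Lnorm M 2 d = (if I2 = \<infinity> then \<infinity> else ennreal (enn2real I2 powr (1 / 2)))"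
    unfolding Lnorm_def I2_def Let_def by simp
  have I2fin: "I2 \<noteq> \<infinity>" using small L2def unfolding d_def by (auto split: if_splits simp: top_unique)
  have int2: "integrable M (\<lambda>x. (d x)\<^sup>2)"
    apply (rule integrableI_nonneg)
    using dm I2fin unfolding I2_def sq by (auto simp: less_top)
  define s where "s = (\<integral> x. (d x)\<^sup>2 \<partial>M)"
  have s0: "s \<ge> 0" unfolding s_def by simp
  have I2s: "I2 = ennreal s" unfolding I2_def sq s_def
    by (rule nn_integral_eq_integral[OF int2]) simp
  define N where "N = sqrt s"
  have LN: "Lnorm M 2 d = ennreal N"
    using L2def I2fin I2s s0 by (simp add: N_def powr_half_sqrt)
  have Nr: "N \<le> r" using small LN Hi(2) unfolding d_def[symmetric] by simp
  have sN: "s = N\<^sup>2" using s0 by (simp add: N_def)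
  define e where "e = (\<lambda>x. eta x * (hinge (f x) 1 - hinge (fstar x) 1)
          + (1 - eta x) * (hinge (f x) (-1) - hinge (fstar x) (-1)))"
  have exc: "excess_risk M eta fstar f = integral\<^sup>L M e"
    unfolding excess_risk_def e_def by simp
  show "(Lnorm M 2 (\<lambda>x. f x - fstar x))\<^sup>2 \<le> ennreal (2 / \<alpha> * excess_risk M eta fstar f)"
  proof (cases "N = 0")
    case True
    then show ?thesis using LN unfolding d_def by simp
  next
    case False
    then have Npos: "N > 0" using s0 by (simp add: N_def)
    define I3 where "I3 = (\<integral>\<^sup>+ x. ennreal (\<bar>d x\<bar> powr (2+\<epsilon>)) \<partial>M)"
    have L3def: "Lnorm M (2+\<epsilon>) d = (if I3 = \<infinity> then \<infinity> else ennreal (enn2real I3 powr (1 / (2+\<epsilon>))))"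
      unfolding Lnorm_def I3_def Let_def by simp
    have L3le: "Lnorm M (2+\<epsilon>) d \<le> ennreal (C' * N)"
      using NormEq(2)[OF fF] LN NormEq(1) Npos unfolding d_def[symmetric] by (simp add: ennreal_mult)
    have I3fin: "I3 \<noteq> \<infinity>" using L3le L3def by (auto split: if_splits simp: top_unique)
    have d3m: "(\<lambda>x. \<bar>d x\<bar> powr (2+\<epsilon>)) \<in> borel_measurable M" using dm by measurable
    have int3: "integrable M (\<lambda>x. \<bar>d x\<bar> powr (2+\<epsilon>))"
      apply (rule integrableI_nonneg)
      using d3m I3fin unfolding I3_def by (auto simp: less_top)
    define m where "m = (\<integral> x. \<bar>d x\<bar> powr (2+\<epsilon>) \<partial>M)"
    have m0: "m \<ge> 0" unfolding m_def by simp
    have I3m: "I3 = ennreal m" unfolding I3_def m_def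
      by (rule nn_integral_eq_integral[OF int3]) simp
    have "ennreal (m powr (1 / (2+\<epsilon>))) \<le> ennreal (C' * N)"
      using L3le L3def I3fin I3m m0 by simp
    hence mle1: "m powr (1 / (2+\<epsilon>)) \<le> C' * N" using NormEq(1) Npos by (simp add: ennreal_le_iff)
    have mle: "m \<le> (C' * N) powr (2+\<epsilon>)"
    proof -
      have "m = (m powr (1 / (2+\<epsilon>))) powr (2+\<epsilon>)" using m0 eps_pos by (simp add: powr_powr)
      also have "\<dots> \<le> (C' * N) powr (2+\<epsilon>)" using mle1 eps_pos by (intro powr_mono2) auto
      finally show ?thesis .
    qed
    obtain \<kappa> where kpos: "\<kappa> > 0" and kb: "\<kappa> powr ((2+\<epsilon>)/2) * (C'*N) powr (2+\<epsilon>) / ((2+\<epsilon>)/2)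
              + \<kappa> powr (-((2+\<epsilon>)/\<epsilon>)) * N\<^sup>2 / ((2+\<epsilon>)/\<epsilon>) \<le> N\<^sup>2/2"
      using key_real[OF eps_pos NormEq(1) Npos] Nr Hi(3) by fastforce
    define A where "A = \<kappa> powr ((2+\<epsilon>)/2) / ((2+\<epsilon>)/2)"
    define B where "B = \<kappa> powr (-((2+\<epsilon>)/\<epsilon>)) / ((2+\<epsilon>)/\<epsilon>)"
    have A0: "A \<ge> 0" and B0: "B \<ge> 0" unfolding A_def B_def using eps_pos by auto
    have AB: "A * m + B * s \<le> s / 2"
    proof -
      have "A * m \<le> A * (C' * N) powr (2+\<epsilon>)" using mle A0 by (rule mult_left_mono)
      moreover have "A * (C' * N) powr (2+\<epsilon>) + B * N\<^sup>2 \<le> N\<^sup>2/2"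
        using kb unfolding A_def B_def times_divide_eq_left .
      ultimately show ?thesis using sN by simp
    qed
    have em: "e \<in> borel_measurable M" unfolding e_def hinge_def using fm fsm eta_meas by measurable
    have intd: "integrable M (\<lambda>x. \<bar>d x\<bar>)"
    proof (rule Bochner_Integration.integrable_bound[where f="\<lambda>x. 1 + (d x)\<^sup>2"])
      show "integrable M (\<lambda>x. 1 + (d x)\<^sup>2)" using int2 by simp
      show "(\<lambda>x. \<bar>d x\<bar>) \<in> borel_measurable M" using dm by measurable
      show "AE x in M. norm \<bar>d x\<bar> \<le> norm (1 + (d x)\<^sup>2)"
      proof (intro AE_I2)
        fix x
        have "\<bar>d x\<bar> \<le> 1 + (d x)\<^sup>2" by (rule l1)
        thus "norm \<bar>d x\<bar> \<le> norm (1 + (d x)\<^sup>2)" by simp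
      qed
    qed
    have inte: "integrable M e"
    proof (rule Bochner_Integration.integrable_bound[OF intd em])
      show "AE x in M. norm (e x) \<le> norm \<bar>d x\<bar>"
      proof (intro AE_I2)
        fix x assume x: "x \<in> space M"
        have h1: "\<bar>hinge (f x) 1 - hinge (fstar x) 1\<bar> \<le> \<bar>d x\<bar>" unfolding d_def by (rule hinge_lip) simp
        have h2: "\<bar>hinge (f x) (-1) - hinge (fstar x) (-1)\<bar> \<le> \<bar>d x\<bar>" unfolding d_def by (rule hinge_lip) simp
        have "\<bar>e x\<bar> \<le> eta x * \<bar>hinge (f x) 1 - hinge (fstar x) 1\<bar> + (1 - eta x) * \<bar>hinge (f x) (-1) - hinge (fstar x) (-1)\<bar>"
        proof -
          have "\<bar>e x\<bar> \<le> \<bar>eta x * (hinge (f x) 1 - hinge (fstar x) 1)\<bar> + \<bar>(1 - eta x) * (hinge (f x) (-1) - hinge (fstar x) (-1))\<bar>"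
            unfolding e_def by (rule abs_triangle_ineq)
          thus ?thesis using eta_range[OF x] by (simp add: abs_mult)
        qed
        also have "\<dots> \<le> eta x * \<bar>d x\<bar> + (1 - eta x) * \<bar>d x\<bar>"
          using eta_range[OF x] h1 h2 by (intro add_mono mult_left_mono) auto
        also have "\<dots> = \<bar>d x\<bar>" by (simp add: algebra_simps)
        finally show "norm (e x) \<le> norm \<bar>d x\<bar>" by simp
      qed
    qed
    have pt: "(d x)\<^sup>2 \<le> e x / \<alpha> + (A * \<bar>d x\<bar> powr (2+\<epsilon>) + B * (d x)\<^sup>2)" if x: "x \<in> space M" for x
    proof -
      have ed: "\<alpha> * \<bar>d x\<bar> \<le> e x"
        unfolding e_def d_def by (rule excess_pt[OF Hi(1) Hi(4)[OF x] bayes[OF x]])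
      hence ed': "\<bar>d x\<bar> \<le> e x / \<alpha>" using Hi(1) by (simp add: field_simps)
      have nn: "0 \<le> A * \<bar>d x\<bar> powr (2+\<epsilon>) + B * (d x)\<^sup>2" using A0 B0 by simp
      have e0: "0 \<le> e x / \<alpha>" using ed' by linarith
      show ?thesis
      proof (cases "\<bar>d x\<bar> \<le> 1")
        case True
        have "(d x)\<^sup>2 \<le> \<bar>d x\<bar>" using True by (rule l2)
        thus ?thesis using ed' nn by linarith
      next
        case False
        have y: "(d x)\<^sup>2 \<le> A * \<bar>d x\<bar> powr (2+\<epsilon>) + B"
          using young_pt[OF eps_pos kpos, of "d x"] unfolding A_def B_def times_divide_eq_left .
        have "1 \<le> (d x)\<^sup>2" using False by (rule l3)
        hence "B \<le> B * (d x)\<^sup>2" using B0 by (simp add: mult_le_cancel_left1)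
        thus ?thesis using y e0 by linarith
      qed
    qed
    have "s \<le> (\<integral> x. e x / \<alpha> + (A * \<bar>d x\<bar> powr (2+\<epsilon>) + B * (d x)\<^sup>2) \<partial>M)"
      unfolding s_def using int2 inte int3 pt
      by (intro integral_mono) auto
    also have "\<dots> = integral\<^sup>L M e / \<alpha> + (A * m + B * s)"
      using inte int3 int2 unfolding m_def s_def by (simp add: integral_add integral_divide_zero)
    finally have "s \<le> integral\<^sup>L M e / \<alpha> + s / 2" using AB by linarith
    hence sle: "s \<le> 2 / \<alpha> * integral\<^sup>L M e" by (simp add: field_simps)
    have "(Lnorm M 2 d)\<^sup>2 = ennreal s" using LN sN Npos by (simp add: ennreal_power)
    also have "\<dots> \<le> ennreal (2 / \<alpha> * excess_risk M eta fstar f)" using sle exc by (simp add: ennreal_leI)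
    finally show ?thesis unfolding d_def .
  qed
qed

end
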